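(* Let $\varepsilon>0$, $\delta>0$, $\eta>0$. For all $x\in\mathbb R^n$, the randomized estimator $\tilde m(x)$ defined below can be computed in $O(n\log n)$ operations.
   Context: For $x\in\mathbb R^n$, $x_{(1)}\le\cdots\le x_{(n)}$ are its ordered coordinates, $\ell=\lfloor n/2\rfloor$, and $\hat m(x)=x_{(\ell)}$. $\mathrm{d_H}(x,x')$ is the number of coordinates in which $x,x'\in\mathbb R^n$ differ. Define $\hat A(x)=\min\{k=0,1,\ldots:\exists x'\in\mathbb R^n,\ \mathrm{d_H}(x,x')=k,\ |\hat m(x)-\hat m(x')|>\eta\}$ and $\tilde A(x)=\hat A(x)+Z_1/\varepsilon$, where $Z_1,Z_2$ are independent Laplace random variables with parameter $1$. Set $\tilde m(x)=\perp$ ("No Reply") if $\tilde A(x)\le1+\frac1\varepsilon\log(2/\delta)$ and $\tilde m(x)=\hat m(x)+\frac\eta\varepsilon Z_2$ otherwise. Sampling $Z_1,Z_2$ counts as $O(1)$ operations. *)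

theory Defs
  imports Complex_Main
begin

text \<open>A point of R^n is a list of reals of length n. Ordered coordinates
  x_(1) <= ... <= x_(n) are given by sort; x_(i) = sort x ! (i-1).\<close>

definition ord_coord :: "real list \<Rightarrow> nat \<Rightarrow> real" where
  "ord_coord x i = sort x ! (i - 1)"

definition ell :: "real list \<Rightarrow> nat" where
  "ell x = length x div 2"

definition med_hat :: "real list \<Rightarrow> real" where
  "med_hat x = ord_coord x (ell x)"

definition dH :: "real list \<Rightarrow> real list \<Rightarrow> nat" where
  "dH x x' = card {i. i < length x \<and> x ! i \<noteq> x' ! i}"

definition A_hat :: "real \<Rightarrow> real list \<Rightarrow> nat" where
  "A_hat \<eta> x = (LEAST k. \<exists>x'. length x' = length x \<and> dH x x' = k \<and>
                     \<bar>med_hat x - med_hat x'\<bar> > \<eta>)"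

definition A_tilde :: "real \<Rightarrow> real \<Rightarrow> real list \<Rightarrow> real \<Rightarrow> real" where
  "A_tilde \<epsilon> \<eta> x z1 = real (A_hat \<eta> x) + z1 / \<epsilon>"

text \<open>None represents the output "No Reply" (\<bottom>). z1, z2 are the sampled
  values of the Laplace variables Z1, Z2.\<close>
definition m_tilde :: "real \<Rightarrow> real \<Rightarrow> real \<Rightarrow> real list \<Rightarrow> real \<Rightarrow> real \<Rightarrow> real option" where
  "m_tilde \<epsilon> \<delta> \<eta> x z1 z2 =
     (if A_tilde \<epsilon> \<eta> x z1 \<le> 1 + (1/\<epsilon>) * ln (2/\<delta>) then None
      else Some (med_hat x + (\<eta>/\<epsilon>) * z2))"

text \<open>Each function returns (result, number of elementary operations).
  Unit-cost RAM model: comparisons, real arithmetic, list indexing and the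
  sampling of Z1, Z2 cost O(1).\<close>

fun merge_c :: "real list \<Rightarrow> real list \<Rightarrow> real list \<times> nat" where
  "merge_c [] ys = (ys, 1)"
| "merge_c xs [] = (xs, 1)"
| "merge_c (x # xs) (y # ys) =
     (if x \<le> y then (let (r, c) = merge_c xs (y # ys) in (x # r, c + 1))
      else (let (r, c) = merge_c (x # xs) ys in (y # r, c + 1)))"

function msort_c :: "real list \<Rightarrow> real list \<times> nat" where
  "msort_c xs =
     (if length xs \<le> 1 then (xs, 1)
      else (let (a, ca) = msort_c (take (length xs div 2) xs);
                (b, cb) = msort_c (drop (length xs div 2) xs);
                (r, cr) = merge_c a b
            in (r, ca + cb + cr + 1)))"
  by pat_completeness auto
termination
  by (relation "measure length") auto

text \<open>Scan over k = 1, 2, ... on the sorted list s (0-indexed, so the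
  median x_(l) is s ! (l-1)), testing whether changing k coordinates can
  move the median by more than eta.\<close>
fun scan_c :: "real list \<Rightarrow> nat \<Rightarrow> real \<Rightarrow> nat \<Rightarrow> nat \<Rightarrow> nat \<times> nat" where
  "scan_c s l \<eta> k 0 = (k, 1)"
| "scan_c s l \<eta> k (Suc fuel) =
     (if (l + k > length s \<or> s ! (l - 1 + k) - s ! (l - 1) > \<eta>)
         \<or> (k \<ge> l \<or> s ! (l - 1) - s ! (l - 1 - k) > \<eta>)
      then (k, 1)
      else (let (r, c) = scan_c s l \<eta> (k + 1) fuel in (r, c + 1)))"

definition m_tilde_alg ::
  "real \<Rightarrow> real \<Rightarrow> real \<Rightarrow> real list \<Rightarrow> real \<Rightarrow> real \<Rightarrow> real option \<times> nat" where
  "m_tilde_alg \<epsilon> \<delta> \<eta> x z1 z2 =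
     (let (s, c1) = msort_c x;
          l = length x div 2;
          (a, c2) = scan_c s l \<eta> 1 (length x);
          At = real a + z1 / \<epsilon>
      in (if At \<le> 1 + (1/\<epsilon>) * ln (2/\<delta>) then None
          else Some (s ! (l - 1) + (\<eta>/\<epsilon>) * z2), c1 + c2 + 10))"

end

theory Submission
  imports Defs "HOL-Library.Multiset"
begin


lemma merge_c_mset: "mset (fst (merge_c xs ys)) = mset xs + mset ys"
  by (induction xs ys rule: merge_c.induct) (auto split: prod.splits)

lemma merge_c_set: "set (fst (merge_c xs ys)) = set xs \<union> set ys"
  by (metis merge_c_mset set_mset_mset set_mset_union)

lemma merge_c_sorted: "sorted xs \<Longrightarrow> sorted ys \<Longrightarrow> sorted (fst (merge_c xs ys))"
proof (induction xs ys rule: merge_c.induct)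
  case (3 x xs y ys)
  show ?case
  proof (cases "x \<le> y")
    case True
    have s: "sorted (fst (merge_c xs (y # ys)))" using 3 True by auto
    have "\<forall>z\<in>set (fst (merge_c xs (y # ys))). x \<le> z"
      using 3(3,4) True by (auto simp: merge_c_set)
    then show ?thesis using True s by (auto split: prod.splits)
  next
    case False
    have s: "sorted (fst (merge_c (x # xs) ys))" using 3 False by auto
    have "\<forall>z\<in>set (fst (merge_c (x#xs) ys)). y \<le> z"
      using 3(3,4) False by (auto simp: merge_c_set)
    then show ?thesis using False s by (auto split: prod.splits)
  qed
qed auto

lemma merge_c_cost: "snd (merge_c xs ys) \<le> length xs + length ys + 1"
  by (induction xs ys rule: merge_c.induct) (auto split: prod.splits)

declare msort_c.simps[simp del]

lemma msort_c_base: "length xs \<le> 1 \<Longrightarrow> msort_c xs = (xs, 1)"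
  by (subst msort_c.simps) simp

lemma msort_c_step: "\<not> length xs \<le> 1 \<Longrightarrow> msort_c (take (length xs div 2) xs) = (a, ca) \<Longrightarrow>
   msort_c (drop (length xs div 2) xs) = (b, cb) \<Longrightarrow> msort_c xs = (fst (merge_c a b), ca + cb + snd (merge_c a b) + 1)"
  apply (subst msort_c.simps)
  apply (simp add: Let_def split: prod.split)
  done

lemma msort_c_props: "mset (fst (msort_c xs)) = mset xs \<and> sorted (fst (msort_c xs))"
proof (induction xs rule: msort_c.induct)
  case (1 xs)
  show ?case
  proof (cases "length xs \<le> 1")
    case True
    then show ?thesis apply (simp add: msort_c_base)
      by (metis One_nat_def le_Suc_eq le_zero_eq length_0_conv length_Suc_conv sorted1 sorted0)
  next
    case False
    obtain a ca where a: "msort_c (take (length xs div 2) xs) = (a, ca)" by fastforce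
    obtain b cb where b: "msort_c (drop (length xs div 2) xs) = (b, cb)" by fastforce
    have ia: "mset a = mset (take (length xs div 2) xs) \<and> sorted a" using 1(1)[OF False] a by simp
    have ib: "mset b = mset (drop (length xs div 2) xs) \<and> sorted b" using 1(2)[OF False a[symmetric]] b by simp
    have e: "fst (msort_c xs) = fst (merge_c a b)"
      using msort_c_step[OF False a b] by simp
    show ?thesis unfolding e using ia ib merge_c_mset merge_c_sorted
      by (metis append_take_drop_id mset_append)
  qed
qed

lemma msort_c_sort: "fst (msort_c xs) = sort xs"
  using msort_c_props by (metis properties_for_sort)

lemma msort_cost: "1 \<le> length xs \<Longrightarrow> length xs \<le> 2^k \<Longrightarrow> snd (msort_c xs) \<le> 4 * length xs * (k+1)"
proof (induction k arbitrary: xs)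
  case 0
  then show ?case using 0 by (simp add: msort_c_base)
next
  case (Suc k)
  show ?case
  proof (cases "length xs \<le> 1")
    case True
    then show ?thesis using Suc.prems by (simp add: msort_c_base)
  next
    case False
    define n where "n = length xs"
    define d where "d = n div 2"
    have n2: "n \<ge> 2" using False n_def by simp
    have d1: "1 \<le> d" "d \<le> 2^k" "1 \<le> n - d" "n - d \<le> 2^k" "d \<le> n"
      using n2 Suc.prems(2) unfolding d_def n_def[symmetric] by auto
    obtain a ca where a: "msort_c (take d xs) = (a, ca)" by fastforce
    obtain b cb where b: "msort_c (drop d xs) = (b, cb)" by fastforce
    have lt: "length (take d xs) = d" using d1 n_def by simp
    have ld: "length (drop d xs) = n - d" using n_def by simp
    have la: "length a = d" using msort_c_sort[of "take d xs"] a lt by simp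
    have lb: "length b = n - d" using msort_c_sort[of "drop d xs"] b ld by simp
    have ca: "ca \<le> 4 * d * (k+1)"
      using Suc.IH[of "take d xs"] a lt d1 by simp
    have cb: "cb \<le> 4 * (n - d) * (k+1)"
      using Suc.IH[of "drop d xs"] b ld d1 by simp
    have e: "snd (msort_c xs) = ca + cb + snd (merge_c a b) + 1"
      using msort_c_step[OF False a[unfolded d_def n_def] b[unfolded d_def n_def]] by simp
    have m: "snd (merge_c a b) \<le> n + 1" using merge_c_cost[of a b] la lb d1 by simp
    have eq: "4 * d * (k+1) + 4 * (n - d) * (k+1) = 4 * (d + (n - d)) * (k+1)"
      by (simp only: add_mult_distrib add_mult_distrib2)
    have "ca + cb \<le> 4 * n * (k+1)" using ca cb eq d1 by simp
    then have "snd (msort_c xs) \<le> 4 * n * (k+1) + n + 2" using e m by linarith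
    moreover have "4 * n * (k+1) + n + 2 \<le> 4 * n * (Suc k + 1)"
      using n2 by (simp add: algebra_simps)
    ultimately show ?thesis using n_def by simp
  qed
qed



lemma count_sort: "card {i. i < length (sort xs) \<and> P (sort xs ! i)} = card {i. i < length xs \<and> P (xs ! i)}"
proof -
  have "length (filter P (sort xs)) = length (filter P xs)"
    by (metis mset_filter mset_sort size_mset)
  then show ?thesis by (simp add: length_filter_conv_card)
qed

lemma sorted_le:
  fixes ys :: "real list"
  assumes "sorted ys" "j < length ys" "card {i. i < length ys \<and> ys!i \<le> v} > j"
  shows "ys!j \<le> v"
proof (rule ccontr)
  assume a: "\<not> ys!j \<le> v"
  have "{i. i < length ys \<and> ys!i \<le> v} \<subseteq> {..<j}"
  proof
    fix i assume i: "i \<in> {i. i < length ys \<and> ys!i \<le> v}"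
    show "i \<in> {..<j}"
    proof (rule ccontr)
      assume "i \<notin> {..<j}"
      then have "ys!j \<le> ys!i" using assms(1) i by (simp add: sorted_nth_mono)
      then show False using a i by auto
    qed
  qed
  then have "card {i. i < length ys \<and> ys!i \<le> v} \<le> j"
    by (metis card_lessThan card_mono finite_lessThan)
  then show False using assms(3) by simp
qed

lemma sorted_ge:
  fixes ys :: "real list"
  assumes "sorted ys" "j < length ys" "card {i. i < length ys \<and> v \<le> ys!i} \<ge> length ys - j"
  shows "v \<le> ys!j"
proof (rule ccontr)
  assume a: "\<not> v \<le> ys!j"
  have "{i. i < length ys \<and> v \<le> ys!i} \<subseteq> {Suc j..<length ys}"
  proof
    fix i assume i: "i \<in> {i. i < length ys \<and> v \<le> ys!i}"
    show "i \<in> {Suc j..<length ys}"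
    proof (rule ccontr)
      assume "i \<notin> {Suc j..<length ys}"
      then have "ys!i \<le> ys!j" using assms(1,2) i by (simp add: sorted_nth_mono)
      then show False using a i by auto
    qed
  qed
  then have "card {i. i < length ys \<and> v \<le> ys!i} \<le> length ys - Suc j"
    by (metis card_atLeastLessThan card_mono finite_atLeastLessThan)
  then show False using assms(2,3) by simp
qed

lemma card_change:
  assumes "length x' = length x" "dH x x' = k"
  shows "card {i. i < length x \<and> P (x!i)} \<le> card {i. i < length x' \<and> P (x'!i)} + k"
proof -
  let ?A = "{i. i < length x \<and> P (x!i)}"
  let ?B = "{i. i < length x' \<and> P (x'!i)}"
  let ?D = "{i. i < length x \<and> x!i \<noteq> x'!i}"
  have "?A \<subseteq> ?B \<union> ?D" using assms(1) by auto
  then have "card ?A \<le> card (?B \<union> ?D)" by (intro card_mono) auto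
  also have "\<dots> \<le> card ?B + card ?D" by (rule card_Un_le)
  finally show ?thesis using assms(2) unfolding dH_def by simp
qed

lemma witness:
  assumes D: "D \<subseteq> {..<length x}" and M: "\<forall>i<length x. x!i \<noteq> M" and PM: "P M"
    and DP: "\<forall>i\<in>D. \<not> P (x!i)"
  shows "\<exists>x'. length x' = length x \<and> dH x x' = card D \<and>
     card {i. i < length x' \<and> P (x'!i)} = card {i. i < length x \<and> P (x!i)} + card D"
proof -
  define x' where "x' = map (\<lambda>i. if i \<in> D then M else x!i) [0..<length x]"
  have l: "length x' = length x" by (simp add: x'_def)
  have nth: "\<And>i. i < length x \<Longrightarrow> x'!i = (if i \<in> D then M else x!i)" by (simp add: x'_def)
  have "{i. i < length x \<and> x!i \<noteq> x'!i} = D" using D M nth by (auto split: if_splits)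
  then have d: "dH x x' = card D" by (simp add: dH_def)
  have "{i. i < length x' \<and> P (x'!i)} = {i. i < length x \<and> P (x!i)} \<union> D"
    using D PM nth l by auto
  moreover have "{i. i < length x \<and> P (x!i)} \<inter> D = {}" using DP by auto
  moreover have "finite D" using D finite_subset by blast
  ultimately have "card {i. i < length x' \<and> P (x'!i)} = card {i. i < length x \<and> P (x!i)} + card D"
    by (simp add: card_Un_disjoint)
  then show ?thesis using l d by blast
qed



definition cond :: "real list \<Rightarrow> nat \<Rightarrow> real \<Rightarrow> nat \<Rightarrow> bool" where
  "cond s l \<eta> k = ((l + k > length s \<or> s ! (l - 1 + k) - s ! (l - 1) > \<eta>)
         \<or> (k \<ge> l \<or> s ! (l - 1) - s ! (l - 1 - k) > \<eta>))"

lemma scan_cond: "scan_c s l \<eta> k (Suc fuel) =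
   (if cond s l \<eta> k then (k,1) else (let (r,c) = scan_c s l \<eta> (k+1) fuel in (r, c+1)))"
  by (simp add: cond_def)

lemma scan_cost: "snd (scan_c s l \<eta> k fuel) \<le> fuel + 1"
proof (induction fuel arbitrary: k)
  case 0 then show ?case by simp
next
  case (Suc fuel)
  show ?case using Suc.IH[of "k+1"]
    unfolding scan_cond by (auto simp: Let_def split: prod.splits)
qed

lemma scan_res: "(\<forall>j. k \<le> j \<and> j < k0 \<longrightarrow> \<not> cond s l \<eta> j) \<Longrightarrow> cond s l \<eta> k0 \<Longrightarrow> k \<le> k0
   \<Longrightarrow> k0 \<le> k + fuel \<Longrightarrow> fst (scan_c s l \<eta> k fuel) = k0"
proof (induction fuel arbitrary: k)
  case 0 then show ?case by simp
next
  case (Suc fuel)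
  show ?case
  proof (cases "cond s l \<eta> k")
    case True
    then have "k = k0" using Suc.prems by (meson le_neq_implies_less order_refl)
    then show ?thesis using True unfolding scan_cond by simp
  next
    case False
    then have "k \<noteq> k0" using Suc.prems by auto
    then have "fst (scan_c s l \<eta> (k+1) fuel) = k0" using Suc.prems by (intro Suc.IH) auto
    then show ?thesis using False unfolding scan_cond
      by (cases "scan_c s l \<eta> (k+1) fuel") (simp add: Let_def)
  qed
qed

lemma med_ge:
  fixes y :: "real list"
  assumes "1 \<le> l" "l \<le> length y" "card {i. i < length y \<and> w \<le> y!i} \<ge> length y - (l-1)"
  shows "w \<le> sort y ! (l-1)"
  using sorted_ge[of "sort y" "l-1" w] count_sort[of y "\<lambda>z. w \<le> z"] assms by simp

lemma med_le:
  fixes y :: "real list"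
  assumes "1 \<le> l" "l \<le> length y" "card {i. i < length y \<and> y!i \<le> w} \<ge> l"
  shows "sort y ! (l-1) \<le> w"
  using sorted_le[of "sort y" "l-1" w] count_sort[of y "\<lambda>z. z \<le> w"] assms by simp

lemma cnt_low:
  assumes "j < length s" "\<And>i. i \<le> j \<Longrightarrow> P (s!i)"
  shows "j + 1 \<le> card {i. i < length s \<and> P (s!i)}"
proof -
  have "{..j} \<subseteq> {i. i < length s \<and> P (s!i)}" using assms by auto
  then have "card {..j} \<le> card {i. i < length s \<and> P (s!i)}" by (intro card_mono) auto
  then show ?thesis by simp
qed

lemma cnt_high:
  assumes "j \<le> length s" "\<And>i. j \<le> i \<Longrightarrow> i < length s \<Longrightarrow> P (s!i)"
  shows "length s - j \<le> card {i. i < length s \<and> P (s!i)}"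
proof -
  have "{j..<length s} \<subseteq> {i. i < length s \<and> P (s!i)}" using assms by auto
  then have "card {j..<length s} \<le> card {i. i < length s \<and> P (s!i)}" by (intro card_mono) auto
  then show ?thesis by simp
qed

lemma dH0: "length x' = length x \<Longrightarrow> dH x x' = 0 \<Longrightarrow> x' = x"
  unfolding dH_def by (auto intro: nth_equalityI)



lemma A_hat_alg:
  fixes x :: "real list" and \<eta> :: real
  assumes n2: "length x \<ge> 2" and eta: "\<eta> > 0"
  shows "fst (scan_c (sort x) (length x div 2) \<eta> 1 (length x)) = A_hat \<eta> x"
proof -
  define n where "n = length x"
  define s where "s = sort x"
  define l where "l = n div 2"
  have ls: "length s = n" by (simp add: s_def n_def)
  have ss: "sorted s" by (simp add: s_def)
  have l1: "1 \<le> l" "2 * l \<le> n" "l \<le> n" using n2 by (auto simp: l_def n_def)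
  have med: "\<And>y. length y = n \<Longrightarrow> med_hat y = sort y ! (l-1)"
    by (simp add: med_hat_def ord_coord_def ell_def l_def)
  define m where "m = s ! (l-1)"
  have mx: "med_hat x = m" using med[of x] by (simp add: m_def s_def n_def)
  have mono: "\<And>i j. i \<le> j \<Longrightarrow> j < n \<Longrightarrow> s!i \<le> s!j" using ss ls by (simp add: sorted_nth_mono)
  define k0 where "k0 = (LEAST k. 1 \<le> k \<and> cond s l \<eta> k)"
  have cl: "cond s l \<eta> l" by (simp add: cond_def)
  have k0: "1 \<le> k0 \<and> cond s l \<eta> k0" unfolding k0_def by (rule LeastI[of _ l]) (use cl l1 in auto)
  have k0l: "k0 \<le> l" unfolding k0_def by (rule Least_le) (use cl l1 in auto)
  have nk: "\<And>j. 1 \<le> j \<Longrightarrow> j < k0 \<Longrightarrow> \<not> cond s l \<eta> j"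
    using not_less_Least k0_def by blast
  have scan: "fst (scan_c s l \<eta> 1 n) = k0"
    by (rule scan_res) (use k0 k0l nk l1 in auto)
  have cnt: "\<And>P. card {i. i < n \<and> P (s!i)} = card {i. i < length x \<and> P (x!i)}"
    using count_sort s_def n_def by simp
  have "A_hat \<eta> x = k0" unfolding A_hat_def
  proof (rule Least_equality)
    have kn: "k0 \<le> n" using k0l l1 by simp
    have fin: "finite (set x)" "set x \<noteq> {}" using n2 by auto
    have mset_in: "\<And>i. i < n \<Longrightarrow> x!i \<in> set x" using n_def by simp
    have sset: "\<And>i. i < n \<Longrightarrow> s!i \<in> set x" using ls s_def by (metis nth_mem set_sort)
    have mxm: "\<And>i. i < n \<Longrightarrow> x!i \<le> Max (set x)" using fin mset_in by simp
    have mnm: "\<And>i. i < n \<Longrightarrow> Min (set x) \<le> x!i" using fin mset_in by simp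
    have smx: "\<And>i. i < n \<Longrightarrow> s!i \<le> Max (set x)" using fin sset by simp
    have smn: "\<And>i. i < n \<Longrightarrow> Min (set x) \<le> s!i" using fin sset by simp
    have ml: "l - 1 < n" using l1 by simp
    have c0: "(l + k0 > n \<or> s!(l-1+k0) - m > \<eta>) \<or> (k0 \<ge> l \<or> m - s!(l-1-k0) > \<eta>)"
      using k0 ls unfolding cond_def m_def by simp
    then consider (UA) "l + k0 > n" | (UB) "l + k0 \<le> n" "s!(l-1+k0) - m > \<eta>"
      | (DA) "k0 \<ge> l" | (DB) "k0 < l" "m - s!(l-1-k0) > \<eta>" by linarith
    then show "\<exists>x'. length x' = length x \<and> dH x x' = k0 \<and> \<eta> < \<bar>med_hat x - med_hat x'\<bar>"
    proof cases
      case UA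
      define M where "M = Max (set x) + \<eta> + 1"
      have "\<exists>x'. length x' = length x \<and> dH x x' = card {..<k0} \<and>
          card {i. i < length x' \<and> M \<le> x'!i} = card {i. i < length x \<and> M \<le> x!i} + card {..<k0}"
      proof (rule witness)
        have xM: "x!i < M" if "i < length x" for i
        proof -
          have "x!i \<le> Max (set x)" using mxm[of i] that n_def by simp
          then show ?thesis using eta unfolding M_def by linarith
        qed
        show "{..<k0} \<subseteq> {..<length x}" using kn n_def by auto
        show "\<forall>i<length x. x!i \<noteq> M" using xM by (meson less_irrefl)
        show "M \<le> M" by simp
        show "\<forall>i\<in>{..<k0}. \<not> M \<le> x!i" using xM kn n_def by (meson lessThan_iff not_le order_less_le_trans)
      qed
      then obtain x' where x': "length x' = n" "dH x x' = k0"
          "card {i. i < length x' \<and> M \<le> x'!i} \<ge> k0" using n_def by auto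
      have "M \<le> med_hat x'" using med_ge[of l x' M] med[of x'] x' l1 UA by simp
      moreover have "m \<le> Max (set x)" using smx ml m_def by simp
      ultimately show ?thesis using x' mx eta n_def unfolding M_def by auto
    next
      case UB
      define w where "w = s!(l-1+k0)"
      define M where "M = Max (set x) + 1"
      have wM: "w \<le> Max (set x)" using smx[of "l-1+k0"] UB l1 unfolding w_def by simp
      have lw: "s!i < w" if "i \<le> l - 1" for i
      proof -
        have "s!i \<le> m" using mono[of i "l-1"] that ml unfolding m_def by simp
        then show ?thesis using UB eta unfolding w_def by linarith
      qed
      have "l - 1 + 1 \<le> card {i. i < n \<and> s!i < w}"
        using cnt_low[of "l-1" s "\<lambda>z. z < w", OF _ lw] ml ls by simp
      then have "k0 \<le> card {i. i < length x \<and> x!i < w}" using cnt[of "\<lambda>z. z < w"] k0l l1 by simp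
      then obtain D where D: "D \<subseteq> {i. i < length x \<and> x!i < w}" "card D = k0"
        by (meson obtain_subset_with_card_n)
      have "\<exists>x'. length x' = length x \<and> dH x x' = card D \<and>
          card {i. i < length x' \<and> w \<le> x'!i} = card {i. i < length x \<and> w \<le> x!i} + card D"
      proof (rule witness[where M = M])
        have xM: "x!i < M" if "i < length x" for i
        proof -
          have "x!i \<le> Max (set x)" using mxm[of i] that n_def by simp
          then show ?thesis unfolding M_def by linarith
        qed
        show "D \<subseteq> {..<length x}" using D by auto
        show "\<forall>i<length x. x!i \<noteq> M" using xM by (meson less_irrefl)
        show "w \<le> M" using wM unfolding M_def by simp
        show "\<forall>i\<in>D. \<not> w \<le> x!i" using D by auto
      qed
      then obtain x' where x': "length x' = n" "dH x x' = k0"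
          "card {i. i < length x' \<and> w \<le> x'!i} = card {i. i < length x \<and> w \<le> x!i} + k0"
        using n_def D by auto
      have "n - (l - 1 + k0) \<le> card {i. i < n \<and> w \<le> s!i}"
        using cnt_high[of "l-1+k0" s "\<lambda>z. w \<le> z"] UB mono ls unfolding w_def by auto
      then have "n - (l - 1) \<le> card {i. i < length x' \<and> w \<le> x'!i}" using cnt[of "\<lambda>z. w \<le> z"] x' UB by simp
      then have "w \<le> med_hat x'" using med_ge[of l x' w] med[of x'] x' l1 by simp
      then show ?thesis using x' mx UB n_def unfolding w_def by auto
    next
      case DA
      define M where "M = Min (set x) - \<eta> - 1"
      have "\<exists>x'. length x' = length x \<and> dH x x' = card {..<k0} \<and>
          card {i. i < length x' \<and> x'!i \<le> M} = card {i. i < length x \<and> x!i \<le> M} + card {..<k0}"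
      proof (rule witness)
        have xM: "M < x!i" if "i < length x" for i
        proof -
          have "Min (set x) \<le> x!i" using mnm[of i] that n_def by simp
          then show ?thesis using eta unfolding M_def by linarith
        qed
        show "{..<k0} \<subseteq> {..<length x}" using kn n_def by auto
        show "\<forall>i<length x. x!i \<noteq> M" using xM by (meson less_irrefl)
        show "M \<le> M" by simp
        show "\<forall>i\<in>{..<k0}. \<not> x!i \<le> M" using xM kn n_def by (meson lessThan_iff not_le order_less_le_trans)
      qed
      then obtain x' where x': "length x' = n" "dH x x' = k0"
          "card {i. i < length x' \<and> x'!i \<le> M} \<ge> k0" using n_def by auto
      have "med_hat x' \<le> M" using med_le[of l x' M] med[of x'] x' l1 DA by simp
      moreover have "Min (set x) \<le> m" using smn ml m_def by simp
      ultimately show ?thesis using x' mx eta n_def unfolding M_def by auto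
    next
      case DB
      define w where "w = s!(l-1-k0)"
      define M where "M = Min (set x) - 1"
      have wM: "Min (set x) \<le> w" using smn[of "l-1-k0"] l1 unfolding w_def by simp
      have hw: "w < s!i" if "l - 1 \<le> i" "i < length s" for i
      proof -
        have "m \<le> s!i" using mono[of "l-1" i] that ls unfolding m_def by simp
        then show ?thesis using DB eta unfolding w_def by linarith
      qed
      have "n - (l - 1) \<le> card {i. i < n \<and> w < s!i}"
        using cnt_high[of "l-1" s "\<lambda>z. w < z", OF _ hw] ml ls by simp
      then have "k0 \<le> card {i. i < length x \<and> w < x!i}" using cnt[of "\<lambda>z. w < z"] DB l1 by simp
      then obtain D where D: "D \<subseteq> {i. i < length x \<and> w < x!i}" "card D = k0"
        by (meson obtain_subset_with_card_n)
      have "\<exists>x'. length x' = length x \<and> dH x x' = card D \<and>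
          card {i. i < length x' \<and> x'!i \<le> w} = card {i. i < length x \<and> x!i \<le> w} + card D"
      proof (rule witness[where M = M])
        have xM: "M < x!i" if "i < length x" for i
        proof -
          have "Min (set x) \<le> x!i" using mnm[of i] that n_def by simp
          then show ?thesis unfolding M_def by linarith
        qed
        show "D \<subseteq> {..<length x}" using D by auto
        show "\<forall>i<length x. x!i \<noteq> M" using xM by (meson less_irrefl)
        show "M \<le> w" using wM unfolding M_def by simp
        show "\<forall>i\<in>D. \<not> x!i \<le> w" using D by auto
      qed
      then obtain x' where x': "length x' = n" "dH x x' = k0"
          "card {i. i < length x' \<and> x'!i \<le> w} = card {i. i < length x \<and> x!i \<le> w} + k0"
        using n_def D by auto
      have "l - 1 - k0 + 1 \<le> card {i. i < n \<and> s!i \<le> w}"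
        using cnt_low[of "l-1-k0" s "\<lambda>z. z \<le> w"] DB mono ls l1 unfolding w_def by auto
      then have "l \<le> card {i. i < length x' \<and> x'!i \<le> w}" using cnt[of "\<lambda>z. z \<le> w"] x' DB by simp
      then have "med_hat x' \<le> w" using med_le[of l x' w] med[of x'] x' l1 by simp
      then show ?thesis using x' mx DB n_def unfolding w_def by auto
    qed
  next
    fix y assume "\<exists>x'. length x' = length x \<and> dH x x' = y \<and> \<eta> < \<bar>med_hat x - med_hat x'\<bar>"
    then obtain x' where x': "length x' = n" "dH x x' = y" "\<eta> < \<bar>med_hat x - med_hat x'\<bar>"
      using n_def by auto
    show "k0 \<le> y"
    proof (rule ccontr)
      assume yk: "\<not> k0 \<le> y"
      show False
      proof (cases "y = 0")
        case True
        then have "x' = x" using dH0 x' n_def by auto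
        then show False using x' eta by simp
      next
        case False
        then have nc: "\<not> cond s l \<eta> y" using nk yk by auto
        then have c: "l + y \<le> n" "s!(l-1+y) - m \<le> \<eta>" "y < l" "m - s!(l-1-y) \<le> \<eta>"
          unfolding cond_def m_def using ls by auto
        define wu where "wu = s!(l-1+y)"
        define wl where "wl = s!(l-1-y)"
        have "l - 1 + y + 1 \<le> card {i. i < n \<and> s!i \<le> wu}"
          using cnt_low[of "l-1+y" s "\<lambda>z. z \<le> wu"] c mono l1 ls unfolding wu_def by auto
        then have "l + y \<le> card {i. i < length x \<and> x!i \<le> wu}" using cnt[of "\<lambda>z. z \<le> wu"] l1 by simp
        moreover have "card {i. i < length x \<and> x!i \<le> wu} \<le> card {i. i < length x' \<and> x'!i \<le> wu} + y"
          using card_change[of x' x y "\<lambda>z. z \<le> wu"] x' n_def by simp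
        ultimately have "l \<le> card {i. i < length x' \<and> x'!i \<le> wu}" by simp
        then have up: "med_hat x' \<le> wu" using med_le[of l x' wu] med[of x'] x' l1 by simp
        have "n - (l - 1 - y) \<le> card {i. i < n \<and> wl \<le> s!i}"
          using cnt_high[of "l-1-y" s "\<lambda>z. wl \<le> z"] c mono l1 ls unfolding wl_def by auto
        then have "n - (l - 1 - y) \<le> card {i. i < length x \<and> wl \<le> x!i}" using cnt[of "\<lambda>z. wl \<le> z"] by simp
        moreover have "card {i. i < length x \<and> wl \<le> x!i} \<le> card {i. i < length x' \<and> wl \<le> x'!i} + y"
          using card_change[of x' x y "\<lambda>z. wl \<le> z"] x' n_def by simp
        ultimately have "n - (l - 1) \<le> card {i. i < length x' \<and> wl \<le> x'!i}" using c by simp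
        then have lo: "wl \<le> med_hat x'" using med_ge[of l x' wl] med[of x'] x' l1 by simp
        show False using up lo c x'(3) mx unfolding wu_def wl_def by auto
      qed
    qed
  qed
  then show ?thesis using scan s_def l_def n_def by simp
qed



lemma ln2_half: "1/2 \<le> ln (2::real)"
  using ln_ge_iff[of 2 "1/2"] exp_half_le2 by simp

lemma msort_cost_ln:
  assumes n2: "length x \<ge> 2"
  shows "real (snd (msort_c x)) \<le> 24 * real (length x) * ln (real (length x))"
proof -
  define n where "n = length x"
  define k where "k = (LEAST k. n \<le> 2^k)"
  have "n < 2^n" by simp
  then have nk: "n \<le> 2^k" unfolding k_def by (meson LeastI less_imp_le)
  have k1: "k \<ge> 1"
  proof (rule ccontr)
    assume "\<not> k \<ge> 1" then have "k = 0" by simp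
    then show False using nk n2 n_def by simp
  qed
  have "\<not> n \<le> 2^(k-1)" unfolding k_def
    by (rule not_less_Least) (use k1 k_def in simp)
  then have lt: "real (2^(k-1)) < real n" by simp
  have "n \<ge> 2" using n2 n_def by simp
  then have n0: "real n > 0" by simp
  have "ln (real (2^(k-1))) < ln (real n)" using lt n0 by simp
  then have "real (k-1) * ln 2 < ln (real n)" by (simp add: ln_realpow)
  moreover have l2: "1/2 \<le> ln (2::real)" by (rule ln2_half)
  moreover have lnn: "ln 2 \<le> ln (real n)"
  proof -
    have "(2::real) \<le> real n" using \<open>n \<ge> 2\<close> by simp
    then show ?thesis by (subst ln_le_cancel_iff) auto
  qed
  ultimately have A: "real (k-1) * ln 2 < ln (real n)" "1/2 \<le> ln (2::real)" "ln 2 \<le> ln (real n)"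
    by blast+
  have "real (k-1) * (1/2) \<le> real (k-1) * ln 2" using A(2) by (intro mult_left_mono) auto
  then have "real (k-1) * (1/2) < ln (real n)" using A(1) by linarith
  moreover have "real (k-1) = real k - 1" using k1 by (simp add: of_nat_diff)
  ultimately have kb: "real k + 1 \<le> 6 * ln (real n)" using A by linarith
  have "snd (msort_c x) \<le> 4 * n * (k+1)" using msort_cost[of x k] n2 nk n_def by simp
  then have "real (snd (msort_c x)) \<le> real (4 * n * (k+1))" by (simp only: of_nat_le_iff)
  also have "\<dots> = 4 * real n * (real k + 1)" by (simp add: algebra_simps)
  also have "\<dots> \<le> 4 * real n * (6 * ln (real n))" using kb n0 by (intro mult_left_mono) auto
  finally show ?thesis unfolding n_def by simp
qed

theorem lemma5:
  fixes \<epsilon> \<delta> \<eta> :: real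
  assumes "\<epsilon> > 0" and "\<delta> > 0" and "\<eta> > 0"
  shows "\<exists>C::real. \<forall>(x::real list) (z1::real) (z2::real). length x \<ge> 2 \<longrightarrow>
           fst (m_tilde_alg \<epsilon> \<delta> \<eta> x z1 z2) = m_tilde \<epsilon> \<delta> \<eta> x z1 z2 \<and>
           real (snd (m_tilde_alg \<epsilon> \<delta> \<eta> x z1 z2))
             \<le> C * real (length x) * ln (real (length x))"
proof (rule exI[of _ 40], intro allI impI conjI)
  fix x :: "real list" and z1 z2 :: real
  assume n2: "length x \<ge> 2"
  define n where "n = length x"
  obtain c1 where ms: "msort_c x = (sort x, c1)" by (metis msort_c_sort prod.collapse)
  obtain c2 where sc: "scan_c (sort x) (n div 2) \<eta> 1 n = (A_hat \<eta> x, c2)"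
    using A_hat_alg[OF n2 assms(3)] n_def by (metis prod.collapse)
  have alg: "m_tilde_alg \<epsilon> \<delta> \<eta> x z1 z2 =
     (if real (A_hat \<eta> x) + z1 / \<epsilon> \<le> 1 + (1/\<epsilon>) * ln (2/\<delta>) then None
          else Some (sort x ! (n div 2 - 1) + (\<eta>/\<epsilon>) * z2), c1 + c2 + 10)"
    unfolding m_tilde_alg_def using ms sc n_def by (simp add: Let_def)
  show "fst (m_tilde_alg \<epsilon> \<delta> \<eta> x z1 z2) = m_tilde \<epsilon> \<delta> \<eta> x z1 z2"
    unfolding alg m_tilde_def A_tilde_def med_hat_def ord_coord_def ell_def n_def by simp
  have c1b: "real c1 \<le> 24 * real n * ln (real n)" using msort_cost_ln[OF n2] ms n_def by simp
  have "c2 \<le> n + 1" using scan_cost[of "sort x" "n div 2" \<eta> 1 n] sc by simp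
  then have "real c2 \<le> real (n + 1)" by (simp only: of_nat_le_iff)
  moreover have "(2::real) \<le> real n" using n2 n_def by simp
  ultimately have c2b: "real c2 + 10 \<le> 7 * real n" by linarith
  have "(2::real) \<le> real n" using n2 n_def by simp
  then have "ln 2 \<le> ln (real n)" by (subst ln_le_cancel_iff) auto
  then have "1/2 \<le> ln (real n)" using ln2_half by linarith
  then have "real n * (1/2) \<le> real n * ln (real n)" by (intro mult_left_mono) auto
  then have "7 * real n \<le> 14 * real n * ln (real n)" by simp
  then show "real (snd (m_tilde_alg \<epsilon> \<delta> \<eta> x z1 z2)) \<le> 40 * real (length x) * ln (real (length x))"
  proof -
    have "real (snd (m_tilde_alg \<epsilon> \<delta> \<eta> x z1 z2)) = real c1 + real c2 + 10" by (simp add: alg)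
    then show ?thesis using c1b c2b \<open>7 * real n \<le> 14 * real n * ln (real n)\<close> unfolding n_def by linarith
  qed
qed


end
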